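(* Let $K\subseteq\mathbb{R}^d$ be a convex body and let $r\ge 0$. Let $E$ be a John ellipsoid of $K$, with center $c$, and let $H$ be a hyperplane passing through $c$, which divides $K$ into the two pieces $K^+=K\cap H^+$ and $K^-=K\cap H^-$, where $H^+$ and $H^-$ are the two closed half-spaces bounded by $H$. Then $$\mathsf{Vol}(K^+ + r\mathsf{B})\le\Big(1-\frac{1}{10d^d}\Big)\Big(\mathsf{Vol}(K^+ + r\mathsf{B})+\mathsf{Vol}(K^- + r\mathsf{B})\Big).$$
   Context: A convex body is a compact convex subset of $\mathbb{R}^d$ with nonempty interior. $\mathsf{B}$ is the closed unit Euclidean ball in $\mathbb{R}^d$, $+$ denotes Minkowski sum $X+Y=\{x+y:x\in X,y\in Y\}$, and $\mathsf{Vol}$ is Lebesgue measure. A John ellipsoid of $K$ is a set $E=A^{-1}(q+\mathsf{B})$, where $q\in\mathbb{R}^d$ and $A$ is an invertible linear map such that $q+\mathsf{B}\subseteq A(K)\subseteq q+d\mathsf{B}$ (such $q$ and $A$ always exist); its center is $A^{-1}q$. *)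

theory Defs
  imports "HOL-Analysis.Analysis"
begin

definition convex_body :: "'a::euclidean_space set \<Rightarrow> bool" where
  "convex_body K \<longleftrightarrow> compact K \<and> convex K \<and> interior K \<noteq> {}"

definition mink_sum :: "'a::euclidean_space set \<Rightarrow> 'a set \<Rightarrow> 'a set" where
  "mink_sum X Y = {x + y | x y. x \<in> X \<and> y \<in> Y}"

text \<open>E = A^{-1}(q + B) is a John ellipsoid of K, given by the data (A, q):
  A invertible linear with q + B \<subseteq> A(K) \<subseteq> q + d B, d the dimension.\<close>
definition john_data :: "'a::euclidean_space set \<Rightarrow> ('a \<Rightarrow> 'a) \<Rightarrow> 'a \<Rightarrow> bool" where
  "john_data K A q \<longleftrightarrow> linear A \<and> bij A \<and>
     cball q 1 \<subseteq> A ` K \<and> A ` K \<subseteq> cball q (real DIM('a))"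

end

theory Submission
  imports Defs
begin

lemma aff_meas:
  fixes S :: "'a::euclidean_space set"
  shows "measure lebesgue ((\<lambda>x. m *\<^sub>R x + d) ` S) = \<bar>m\<bar> ^ DIM('a) * measure lebesgue S"
  using measure_lebesgue_affine[of m d S] by simp

lemma mink_compact:
  fixes X Y :: "'a::euclidean_space set"
  shows "compact X \<Longrightarrow> compact Y \<Longrightarrow> mink_sum X Y \<in> lmeasurable"
  unfolding mink_sum_def by (intro lmeasurable_compact compact_sums)

lemma mink_compact2:
  fixes X Y :: "'a::euclidean_space set"
  shows "compact X \<Longrightarrow> compact Y \<Longrightarrow> compact (mink_sum X Y)"
  unfolding mink_sum_def by (intro compact_sums)

lemma aff_img_lmeas:
  fixes S :: "'a::euclidean_space set"
  shows "compact S \<Longrightarrow> (\<lambda>x. m *\<^sub>R x + d) ` S \<in> lmeasurable"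
  by (intro lmeasurable_compact compact_continuous_image continuous_intros)

theorem lemma4p1:
  fixes K :: "'a::euclidean_space set" and r :: real
    and A :: "'a \<Rightarrow> 'a" and q c u :: 'a
  assumes "convex_body K"
    and "r \<ge> 0"
    and "john_data K A q"
    and "c = inv A q"
    and "u \<noteq> 0"
  shows "measure lebesgue (mink_sum (K \<inter> {x. u \<bullet> x \<ge> u \<bullet> c}) (cball 0 r))
     \<le> (1 - 1 / (10 * real DIM('a) ^ DIM('a))) *
        (measure lebesgue (mink_sum (K \<inter> {x. u \<bullet> x \<ge> u \<bullet> c}) (cball 0 r))
       + measure lebesgue (mink_sum (K \<inter> {x. u \<bullet> x \<le> u \<bullet> c}) (cball 0 r)))"
proof -
  define d where "d = real DIM('a)"
  have d1: "d \<ge> 1" unfolding d_def using DIM_positive by (simp add: Suc_le_eq)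
  define iA where "iA = inv A"
  have linA: "linear A" and bijA: "bij A" and inK: "cball q 1 \<subseteq> A ` K"
    and outK: "A ` K \<subseteq> cball q d"
    using assms(3) unfolding john_data_def d_def by auto
  have injA: "inj A" using bijA bij_is_inj by blast
  have linI: "linear iA" unfolding iA_def using inj_linear_imp_inv_linear[OF linA injA] .
  have IA: "\<And>x. iA (A x) = x" unfolding iA_def using injA by (simp add: inv_f_f)
  have AI: "\<And>y. A (iA y) = y" unfolding iA_def using bijA by (meson bij_inv_eq_iff)
  have cdef: "c = iA q" using assms(4) iA_def by simp
  have Kc: "compact K" using assms(1) unfolding convex_body_def by blast
  define E where "E = iA ` cball q 1"
  have EK: "E \<subseteq> K"
  proof
    fix y assume "y \<in> E"
    then obtain w where w: "w \<in> cball q 1" "y = iA w" unfolding E_def by blast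
    then obtain x where "x \<in> K" "w = A x" using inK by blast
    then show "y \<in> K" using w IA by simp
  qed
  have blI: "bounded_linear iA" using linI linear_conv_bounded_linear by blast
  have Ec: "compact E" unfolding E_def
    by (intro compact_continuous_image linear_continuous_on blI) simp
  define Hp where "Hp = {x. u \<bullet> x \<ge> u \<bullet> c}"
  define Hm where "Hm = {x. u \<bullet> x \<le> u \<bullet> c}"
  have Hpc: "closed Hp" unfolding Hp_def by (simp add: closed_halfspace_ge)
  have Hmc: "closed Hm" unfolding Hm_def by (simp add: closed_halfspace_le)
  define B where "B = cball (0::'a) r"
  have Bc: "compact B" unfolding B_def by simp
  define Vp where "Vp = measure lebesgue (mink_sum (K \<inter> Hp) B)"
  define Vm where "Vm = measure lebesgue (mink_sum (K \<inter> Hm) B)"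
  have Kpm: "mink_sum (K \<inter> Hp) B \<in> lmeasurable" "mink_sum (K \<inter> Hm) B \<in> lmeasurable"
    using mink_compact Kc Bc Hpc Hmc by (auto intro: compact_Int_closed)
  have Em: "mink_sum (E \<inter> Hm) B \<in> lmeasurable" "mink_sum (E \<inter> Hp) B \<in> lmeasurable"
    "mink_sum E B \<in> lmeasurable"
    using mink_compact Ec Bc Hpc Hmc by (auto intro: compact_Int_closed)
  have s1: "measure lebesgue (mink_sum (E \<inter> Hm) B) \<le> Vm"
  proof -
    have "mink_sum (E \<inter> Hm) B \<subseteq> mink_sum (K \<inter> Hm) B" using EK unfolding mink_sum_def by blast
    then show ?thesis unfolding Vm_def
      using measure_mono_fmeasurable[OF _ fmeasurableD[OF Em(1)] Kpm(2)] by blast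
  qed
  define \<sigma> where "\<sigma> = (\<lambda>x::'a. (-1) *\<^sub>R x + 2 *\<^sub>R c)"
  have refl: "\<sigma> ` mink_sum (E \<inter> Hp) B \<subseteq> mink_sum (E \<inter> Hm) B"
  proof
    fix z assume "z \<in> \<sigma> ` mink_sum (E \<inter> Hp) B"
    then obtain y b where yb: "y \<in> E" "y \<in> Hp" "b \<in> B" "z = \<sigma> (y + b)"
      unfolding mink_sum_def by blast
    obtain w where w: "w \<in> cball q 1" "y = iA w" using yb(1) unfolding E_def by blast
    have "q - (2 *\<^sub>R q - w) = w - q" by (simp add: scaleR_2 algebra_simps)
    then have "dist q (2 *\<^sub>R q - w) = dist q w" unfolding dist_norm
      by (metis norm_minus_commute)
    then have "2 *\<^sub>R q - w \<in> cball q 1" using w(1) by simp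
    moreover have "iA (2 *\<^sub>R q - w) = 2 *\<^sub>R c - y"
      using linI w(2) cdef by (simp add: linear_diff linear_cmul)
    ultimately have "2 *\<^sub>R c - y \<in> E" unfolding E_def by force
    moreover have "2 *\<^sub>R c - y \<in> Hm" using yb(2) unfolding Hp_def Hm_def
      by (simp add: inner_diff_right)
    moreover have "- b \<in> B" using yb(3) unfolding B_def by simp
    moreover have "z = (2 *\<^sub>R c - y) + (- b)" using yb(4) unfolding \<sigma>_def by (simp add: algebra_simps)
    ultimately show "z \<in> mink_sum (E \<inter> Hm) B" unfolding mink_sum_def by blast
  qed
  have s2: "measure lebesgue (mink_sum (E \<inter> Hp) B) \<le> measure lebesgue (mink_sum (E \<inter> Hm) B)"
  proof -
    have "measure lebesgue (mink_sum (E \<inter> Hp) B) = measure lebesgue (\<sigma> ` mink_sum (E \<inter> Hp) B)"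
      unfolding \<sigma>_def aff_meas by simp
    also have "\<dots> \<le> measure lebesgue (mink_sum (E \<inter> Hm) B)"
      by (rule measure_mono_fmeasurable[OF refl _ Em(1)])
        (unfold \<sigma>_def, rule fmeasurableD, rule aff_img_lmeas, intro mink_compact2 compact_Int_closed Ec Bc Hpc)
    finally show ?thesis .
  qed
  have s3: "measure lebesgue (mink_sum E B) \<le> 2 * measure lebesgue (mink_sum (E \<inter> Hm) B)"
  proof -
    have "mink_sum E B = mink_sum (E \<inter> Hp) B \<union> mink_sum (E \<inter> Hm) B"
      unfolding mink_sum_def Hp_def Hm_def by auto (metis linorder_le_cases)
    then have "measure lebesgue (mink_sum E B) \<le> measure lebesgue (mink_sum (E \<inter> Hp) B) + measure lebesgue (mink_sum (E \<inter> Hm) B)"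
      using measure_Un_le[of "mink_sum (E \<inter> Hp) B" lebesgue "mink_sum (E \<inter> Hm) B"] Em by auto
    then show ?thesis using s2 by simp
  qed
  define \<psi> where "\<psi> = (\<lambda>x::'a. d *\<^sub>R x + (1 - d) *\<^sub>R c)"
  have sc: "mink_sum (K \<inter> Hp) B \<subseteq> \<psi> ` mink_sum E B"
  proof
    fix z assume "z \<in> mink_sum (K \<inter> Hp) B"
    then obtain x b where xb: "x \<in> K" "b \<in> B" "z = x + b" unfolding mink_sum_def by blast
    have "A x \<in> cball q d" using outK xb(1) by blast
    define v where "v = (1/d) *\<^sub>R (A x - q)"
    have "norm v \<le> 1" using \<open>A x \<in> cball q d\<close> d1 unfolding v_def
      by (simp add: dist_norm norm_minus_commute divide_le_eq)
    then have qv: "q + v \<in> cball q 1" by (simp add: dist_norm)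
    have "\<psi> (iA (q + v)) = iA (q + d *\<^sub>R v)"
      unfolding \<psi>_def cdef using linI
      by (simp add: linear_add linear_cmul algebra_simps)
    also have "q + d *\<^sub>R v = A x" unfolding v_def using d1 by simp
    finally have x: "\<psi> (iA (q + v)) = x" using IA by simp
    have nb: "norm b \<le> r" using xb(2) unfolding B_def by simp
    have "norm b * 1 \<le> norm b * d" using d1 by (intro mult_left_mono) auto
    then have "norm b / d \<le> norm b" using d1 by (simp add: divide_le_eq)
    moreover have "norm ((1/d) *\<^sub>R b) = norm b / d" using d1 by simp
    ultimately have "norm ((1/d) *\<^sub>R b) \<le> r" using nb by linarith
    then have bB: "(1/d) *\<^sub>R b \<in> B" unfolding B_def by (simp only: mem_cball_0)
    have dn: "d \<noteq> 0" using d1 by simp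
    have "\<psi> (iA (q + v) + (1/d) *\<^sub>R b) = \<psi> (iA (q + v)) + d *\<^sub>R ((1/d) *\<^sub>R b)"
      unfolding \<psi>_def by (simp only: scaleR_add_right add_ac)
    also have "d *\<^sub>R ((1/d) *\<^sub>R b) = b" using dn by simp
    finally have "\<psi> (iA (q + v) + (1/d) *\<^sub>R b) = z" using x xb(3) by simp
    moreover have "iA (q + v) + (1/d) *\<^sub>R b \<in> mink_sum E B"
      using qv bB unfolding mink_sum_def E_def by blast
    ultimately show "z \<in> \<psi> ` mink_sum E B" by blast
  qed
  have s4: "Vp \<le> d ^ DIM('a) * measure lebesgue (mink_sum E B)"
  proof -
    have "Vp \<le> measure lebesgue (\<psi> ` mink_sum E B)"
      unfolding Vp_def
      by (rule measure_mono_fmeasurable[OF sc])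
        (rule fmeasurableD[OF Kpm(1)], unfold \<psi>_def, rule aff_img_lmeas, intro mink_compact2 Ec Bc)
    also have "\<dots> = d ^ DIM('a) * measure lebesgue (mink_sum E B)"
      unfolding \<psi>_def aff_meas using d1 by simp
    finally show ?thesis .
  qed
  define D where "D = d ^ DIM('a)"
  have D1: "D \<ge> 1" unfolding D_def using d1 by simp
  have key: "Vp \<le> 2 * D * Vm"
  proof -
    have "Vp \<le> D * (2 * measure lebesgue (mink_sum (E \<inter> Hm) B))"
      using s4 s3 D1 unfolding D_def by (smt (verit) mult_left_mono)
    also have "\<dots> \<le> D * (2 * Vm)" using s1 D1 by simp
    finally show ?thesis by simp
  qed
  have Vp0: "Vp \<ge> 0" unfolding Vp_def by simp
  have Vm0: "Vm \<ge> 0" unfolding Vm_def by simp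
  have fin: "Vp \<le> (1 - 1 / (10 * D)) * (Vp + Vm)"
  proof -
    have "Vp / (10 * D) \<le> (2 * D * Vm) / (10 * D)" using key D1 by (intro divide_right_mono) auto
    also have "\<dots> = Vm / 5" using D1 by simp
    finally have "Vp / (10 * D) \<le> Vm / 5" .
    moreover have "Vm / 5 \<le> (1 - 1 / (10 * D)) * Vm"
    proof -
      have "1 / (10 * D) \<le> 1/10" using D1 by (simp add: divide_simps)
      then have "1/5 \<le> 1 - 1 / (10 * D)" by simp
      from mult_right_mono[OF this Vm0] show ?thesis by simp
    qed
    ultimately have ev: "1 / (10 * D) * Vp \<le> (1 - 1 / (10 * D)) * Vm" by simp
    define e where "e = 1 / (10 * D)"
    have "(1 - e) * (Vp + Vm) = Vp - e * Vp + (1 - e) * Vm" by (simp add: algebra_simps)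
    then show ?thesis using ev unfolding e_def[symmetric] by linarith
  qed
  then show ?thesis unfolding Vp_def Vm_def Hp_def Hm_def B_def D_def d_def .
qed

end
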